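(* Consider an infinite execution $\gamma_0\gamma_1\ldots$ of the unison dynamics with $\gamma_0$ satisfying $WU_0$, in which every process increments its clock infinitely often, and let $\bot_0$, $\widetilde{p^t.r}$, $t_{p,k}$ and $C_k$ be as in the context. Then for every integer $k\ge \bot_0+D$, $C_k$ is a well-defined coherent cut.
   Context: Let $G=(V,E)$ be a finite connected undirected graph, $|V|=n\ge 2$, $\mathcal N_p$ the set of neighbors of $p$, $d(p,q)$ the hop distance, $D$ the diameter, and $V(p,r)=\{q\in V: d(p,q)\le r\}$. Fix an integer $M\ge 3$; for an integer $a$, $\bar a\in\{0,\dots,M-1\}$ denotes its residue modulo $M$. Each process $p$ holds a clock $p.r\in\{0,\dots,M-1\}$; $p^t.r$ denotes its value in configuration $\gamma_t$. Integers $a,b$ are locally comparable if $\min(\overline{a-b},\overline{b-a})\le 1$, and then $b\ominus a=\overline{b-a}$ if $\overline{b-a}\le 1$, and $b\ominus a=-\overline{a-b}$ otherwise. A configuration satisfies $WU$ if for every edge $\{p,q\}$, $p.r$ and $q.r$ are locally comparable. The delay of a path $\mu=p_0p_1\ldots p_k$ is $\delta_\mu=\sum_{i=0}^{k-1}(p_{i+1}.r\ominus p_i.r)$ ($0$ if $k=0$). A configuration satisfies $WU_0$ if it satisfies $WU$ and the delay is intrinsic: for all $p,q$, all paths from $p$ to $q$ have the same delay, denoted $\delta_{(p,q)}$ ($\delta^t_{(p,q)}$ in $\gamma_t$). Dynamics: a process $p$ is enabled iff for every $q\in\mathcal N_p$, $q.r=p.r$ or $q.r=\overline{p.r+1}$.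 In a transition $\gamma_t\to\gamma_{t+1}$ a nonempty set of processes enabled in $\gamma_t$ is chosen (by an arbitrary, possibly unfair, daemon) and each of them sets $p.r:=\overline{p.r+1}$; other clocks are unchanged. Events: $(p,0)$ is an event for every $p$; $(p,t+1)$ is an event iff $p$ increments in $\gamma_t\to\gamma_{t+1}$. Causal relation $\leadsto$: for an event $(p,t)$ with $t>0$, $(p,t')\leadsto(p,t)$ where $t'$ is the largest time $<t$ such that $(p,t')$ is an event, and for each $q\in\mathcal N_p$, $(q,t')\leadsto(p,t)$ where $t'$ is the largest time $<t$ such that $(q,t')$ is an event. $\preceq$ is the reflexive–transitive closure of $\leadsto$. Lifting: assume $\gamma_0$ satisfies $WU_0$. Choose $p_0$ with $\delta^0_{(p_0,q)}\ge 0$ for all $q\in V$, and let $\bot_0=p_0^0.r$. Define integers $\widetilde{p^t.r}$ by $\widetilde{p^0.r}=\bot_0+\delta^0_{(p_0,p)}$, and $\widetilde{p^{t+1}.r}=\widetilde{p^t.r}+1$ if $p$ increments in $\gamma_t\to\gamma_{t+1}$, $\widetilde{p^{t+1}.r}=\widetilde{p^t.r}$ otherwise. For an integer $k$, $t_{p,k}$ is the smallest $t$ with $\widetilde{p^t.r}=k$, and $C_k=\{(p,t_{p,k}):p\in V\}$. A cut is a map $C:p\mapsto t^C_p$ (identified with the set $\{(p,t^C_p)\}$) such that each $(p,t^C_p)$ is an event. A cut $C$ is coherent if whenever $(q,t')\preceq(p,t)\preceq(p,t^C_p)$, then $(q,t')\preceq(q,t^C_q)$. *)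

theory Defs
  imports Main
begin

definition ugraph :: "'a set \<Rightarrow> ('a \<Rightarrow> 'a \<Rightarrow> bool) \<Rightarrow> bool" where
  "ugraph V E \<longleftrightarrow> finite V \<and> (\<forall>p q. E p q \<longrightarrow> p \<in> V \<and> q \<in> V)
     \<and> (\<forall>p q. E p q \<longrightarrow> E q p) \<and> (\<forall>p. \<not> E p p)"

definition nbrs :: "'a set \<Rightarrow> ('a \<Rightarrow> 'a \<Rightarrow> bool) \<Rightarrow> 'a \<Rightarrow> 'a set" where
  "nbrs V E p = {q \<in> V. E p q}"

fun adj_list :: "('a \<Rightarrow> 'a \<Rightarrow> bool) \<Rightarrow> 'a list \<Rightarrow> bool" where
  "adj_list E [] = True"
| "adj_list E [x] = True"
| "adj_list E (x # y # xs) = (E x y \<and> adj_list E (y # xs))"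

definition is_path :: "'a set \<Rightarrow> ('a \<Rightarrow> 'a \<Rightarrow> bool) \<Rightarrow> 'a \<Rightarrow> 'a list \<Rightarrow> 'a \<Rightarrow> bool" where
  "is_path V E p xs q \<longleftrightarrow> xs \<noteq> [] \<and> set xs \<subseteq> V \<and> adj_list E xs \<and> hd xs = p \<and> last xs = q"

definition connected_graph :: "'a set \<Rightarrow> ('a \<Rightarrow> 'a \<Rightarrow> bool) \<Rightarrow> bool" where
  "connected_graph V E \<longleftrightarrow> (\<forall>p\<in>V. \<forall>q\<in>V. \<exists>xs. is_path V E p xs q)"

definition hop_dist :: "'a set \<Rightarrow> ('a \<Rightarrow> 'a \<Rightarrow> bool) \<Rightarrow> 'a \<Rightarrow> 'a \<Rightarrow> nat" where
  "hop_dist V E p q = (LEAST n. \<exists>xs. is_path V E p xs q \<and> length xs = Suc n)"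

definition diameter :: "'a set \<Rightarrow> ('a \<Rightarrow> 'a \<Rightarrow> bool) \<Rightarrow> nat" where
  "diameter V E = Max {hop_dist V E p q | p q. p \<in> V \<and> q \<in> V}"

definition res :: "int \<Rightarrow> int \<Rightarrow> int" where
  "res M a = a mod M"

definition loc_comp :: "int \<Rightarrow> int \<Rightarrow> int \<Rightarrow> bool" where
  "loc_comp M a b \<longleftrightarrow> min (res M (a - b)) (res M (b - a)) \<le> 1"

definition ominus :: "int \<Rightarrow> int \<Rightarrow> int \<Rightarrow> int" where
  "ominus M b a = (if res M (b - a) \<le> 1 then res M (b - a) else - res M (a - b))"

definition WU :: "int \<Rightarrow> 'a set \<Rightarrow> ('a \<Rightarrow> 'a \<Rightarrow> bool) \<Rightarrow> ('a \<Rightarrow> int) \<Rightarrow> bool" where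
  "WU M V E c \<longleftrightarrow> (\<forall>p q. E p q \<longrightarrow> loc_comp M (c p) (c q))"

fun delay :: "int \<Rightarrow> ('a \<Rightarrow> int) \<Rightarrow> 'a list \<Rightarrow> int" where
  "delay M c [] = 0"
| "delay M c [x] = 0"
| "delay M c (x # y # xs) = ominus M (c y) (c x) + delay M c (y # xs)"

definition WU0 :: "int \<Rightarrow> 'a set \<Rightarrow> ('a \<Rightarrow> 'a \<Rightarrow> bool) \<Rightarrow> ('a \<Rightarrow> int) \<Rightarrow> bool" where
  "WU0 M V E c \<longleftrightarrow> WU M V E c \<and>
     (\<forall>p q xs ys. is_path V E p xs q \<longrightarrow> is_path V E p ys q \<longrightarrow> delay M c xs = delay M c ys)"

text \<open>Intrinsic delay delta_(p,q) (meaningful under WU0: the common delay of all paths p to q).\<close>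
definition idelay :: "int \<Rightarrow> 'a set \<Rightarrow> ('a \<Rightarrow> 'a \<Rightarrow> bool) \<Rightarrow> ('a \<Rightarrow> int) \<Rightarrow> 'a \<Rightarrow> 'a \<Rightarrow> int" where
  "idelay M V E c p q = delay M c (SOME xs. is_path V E p xs q)"

definition enabled :: "int \<Rightarrow> 'a set \<Rightarrow> ('a \<Rightarrow> 'a \<Rightarrow> bool) \<Rightarrow> ('a \<Rightarrow> int) \<Rightarrow> 'a \<Rightarrow> bool" where
  "enabled M V E c p \<longleftrightarrow> (\<forall>q\<in>nbrs V E p. c q = c p \<or> c q = res M (c p + 1))"

definition step :: "int \<Rightarrow> 'a set \<Rightarrow> ('a \<Rightarrow> 'a \<Rightarrow> bool) \<Rightarrow> ('a \<Rightarrow> int) \<Rightarrow> ('a \<Rightarrow> int) \<Rightarrow> bool" where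
  "step M V E c c' \<longleftrightarrow> (\<exists>S. S \<noteq> {} \<and> S \<subseteq> V \<and> (\<forall>p\<in>S. enabled M V E c p) \<and>
      c' = (\<lambda>p. if p \<in> S then res M (c p + 1) else c p))"

definition execution :: "int \<Rightarrow> 'a set \<Rightarrow> ('a \<Rightarrow> 'a \<Rightarrow> bool) \<Rightarrow> (nat \<Rightarrow> 'a \<Rightarrow> int) \<Rightarrow> bool" where
  "execution M V E \<gamma> \<longleftrightarrow> (\<forall>p\<in>V. 0 \<le> \<gamma> 0 p \<and> \<gamma> 0 p < M) \<and> (\<forall>t. step M V E (\<gamma> t) (\<gamma> (Suc t)))"

text \<open>p increments in the transition gamma_t -> gamma_{t+1} (since M >= 3, a process increments
  iff its clock changes).\<close>
definition incr :: "(nat \<Rightarrow> 'a \<Rightarrow> int) \<Rightarrow> nat \<Rightarrow> 'a \<Rightarrow> bool" where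
  "incr \<gamma> t p \<longleftrightarrow> \<gamma> (Suc t) p \<noteq> \<gamma> t p"

definition event :: "'a set \<Rightarrow> (nat \<Rightarrow> 'a \<Rightarrow> int) \<Rightarrow> 'a \<Rightarrow> nat \<Rightarrow> bool" where
  "event V \<gamma> p t \<longleftrightarrow> p \<in> V \<and> (t = 0 \<or> (\<exists>s. t = Suc s \<and> incr \<gamma> s p))"

definition leadsto :: "'a set \<Rightarrow> ('a \<Rightarrow> 'a \<Rightarrow> bool) \<Rightarrow> (nat \<Rightarrow> 'a \<Rightarrow> int) \<Rightarrow> 'a \<times> nat \<Rightarrow> 'a \<times> nat \<Rightarrow> bool" where
  "leadsto V E \<gamma> e e' \<longleftrightarrow> (case e of (q, t') \<Rightarrow> case e' of (p, t) \<Rightarrow>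
     event V \<gamma> p t \<and> 0 < t \<and> (q = p \<or> q \<in> nbrs V E p) \<and>
     event V \<gamma> q t' \<and> t' < t \<and> (\<forall>s. t' < s \<and> s < t \<longrightarrow> \<not> event V \<gamma> q s))"

definition precedes :: "'a set \<Rightarrow> ('a \<Rightarrow> 'a \<Rightarrow> bool) \<Rightarrow> (nat \<Rightarrow> 'a \<Rightarrow> int) \<Rightarrow> 'a \<times> nat \<Rightarrow> 'a \<times> nat \<Rightarrow> bool" where
  "precedes V E \<gamma> = (leadsto V E \<gamma>)\<^sup>*\<^sup>*"

definition is_cut :: "'a set \<Rightarrow> (nat \<Rightarrow> 'a \<Rightarrow> int) \<Rightarrow> ('a \<Rightarrow> nat) \<Rightarrow> bool" where
  "is_cut V \<gamma> C \<longleftrightarrow> (\<forall>p\<in>V. event V \<gamma> p (C p))"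

definition coherent :: "'a set \<Rightarrow> ('a \<Rightarrow> 'a \<Rightarrow> bool) \<Rightarrow> (nat \<Rightarrow> 'a \<Rightarrow> int) \<Rightarrow> ('a \<Rightarrow> nat) \<Rightarrow> bool" where
  "coherent V E \<gamma> C \<longleftrightarrow> is_cut V \<gamma> C \<and>
     (\<forall>p\<in>V. \<forall>q\<in>V. \<forall>t t'. precedes V E \<gamma> (q, t') (p, t) \<longrightarrow> precedes V E \<gamma> (p, t) (p, C p)
        \<longrightarrow> precedes V E \<gamma> (q, t') (q, C q))"

primrec lift :: "int \<Rightarrow> 'a set \<Rightarrow> ('a \<Rightarrow> 'a \<Rightarrow> bool) \<Rightarrow> (nat \<Rightarrow> 'a \<Rightarrow> int) \<Rightarrow> 'a \<Rightarrow> 'a \<Rightarrow> nat \<Rightarrow> int" where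
  "lift M V E \<gamma> p0 p 0 = \<gamma> 0 p0 + idelay M V E (\<gamma> 0) p0 p"
| "lift M V E \<gamma> p0 p (Suc t) = lift M V E \<gamma> p0 p t + (if incr \<gamma> t p then 1 else 0)"

definition tpk :: "int \<Rightarrow> 'a set \<Rightarrow> ('a \<Rightarrow> 'a \<Rightarrow> bool) \<Rightarrow> (nat \<Rightarrow> 'a \<Rightarrow> int) \<Rightarrow> 'a \<Rightarrow> int \<Rightarrow> 'a \<Rightarrow> nat" where
  "tpk M V E \<gamma> p0 k p = (LEAST t. lift M V E \<gamma> p0 p t = k)"

end

theory Submission
  imports Defs
begin


lemma ominus_le1: "M > 0 \<Longrightarrow> ominus M b a \<le> 1"
proof -
  assume M: "M > 0"
  have "0 \<le> (a - b) mod M" using M by simp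
  then show ?thesis unfolding ominus_def res_def by auto
qed

lemma ominus_ge: "M > 0 \<Longrightarrow> loc_comp M a b \<Longrightarrow> ominus M b a \<ge> -1"
proof -
  assume M: "M > 0" and l: "loc_comp M a b"
  have "0 \<le> (a - b) mod M" "0 \<le> (b - a) mod M" using M by simp_all
  then show ?thesis using l unfolding ominus_def res_def loc_comp_def min_def
    by (auto split: if_splits)
qed

lemma ominus_mod: "M > 0 \<Longrightarrow> ominus M b a mod M = (b - a) mod M"
proof -
  have "(- ((a - b) mod M)) mod M = (b - a) mod M"
    by (metis minus_diff_eq mod_minus_eq)
  then show ?thesis by (simp add: ominus_def res_def)
qed

lemma delay_snoc: "xs \<noteq> [] \<Longrightarrow> delay M c (xs @ [y]) = delay M c xs + ominus M (c y) (c (last xs))"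
  by (induction M c xs rule: delay.induct) auto

lemma adj_list_snoc: "xs \<noteq> [] \<Longrightarrow> adj_list E (xs @ [y]) = (adj_list E xs \<and> E (last xs) y)"
  by (induction E xs rule: adj_list.induct) auto

lemma delay_mod: "M > 0 \<Longrightarrow> xs \<noteq> [] \<Longrightarrow> delay M c xs mod M = (c (last xs) - c (hd xs)) mod M"
proof (induction M c xs rule: delay.induct)
  case (3 M c x y xs)
  have "delay M c (x # y # xs) mod M = (ominus M (c y) (c x) mod M + delay M c (y # xs) mod M) mod M"
    by (simp add: mod_add_eq)
  also have "... = ((c y - c x) mod M + (c (last (y#xs)) - c y) mod M) mod M"
    using 3 by (simp add: ominus_mod)
  also have "... = ((c y - c x) + (c (last (y#xs)) - c y)) mod M"
    by (rule mod_add_eq)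
  also have "... = (c (last (x#y#xs)) - c (hd (x#y#xs))) mod M"
    by simp
  finally show ?case .
qed auto

lemma delay_le: "M > 0 \<Longrightarrow> xs \<noteq> [] \<Longrightarrow> delay M c xs \<le> int (length xs) - 1"
proof (induction M c xs rule: delay.induct)
  case (3 M c x y xs)
  then show ?case using ominus_le1[of M "c y" "c x"] by simp
qed auto

lemma en_diff:
  assumes M3: "M \<ge> 3" and en: "enabled M V E c p" and qn: "q \<in> nbrs V E p"
    and cp: "c p = a mod M" and cq: "c q = b mod M" and d: "\<bar>b - a\<bar> \<le> 1"
  shows "0 \<le> b - a \<and> b - a \<le> 1"
proof -
  have "c q = c p \<or> c q = res M (c p + 1)" using en qn by (auto simp: enabled_def)
  then show ?thesis
  proof
    assume "c q = c p"
    then have "M dvd b - a" using cp cq by (simp add: mod_eq_dvd_iff)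
    then have "b - a = 0" using dvd_imp_le_int[of "b - a" M] d M3 by (cases "b - a = 0") auto
    then show ?thesis by simp
  next
    assume "c q = res M (c p + 1)"
    then have "b mod M = (a + 1) mod M" using cp cq by (simp add: res_def mod_add_left_eq)
    then have "M dvd b - (a + 1)" by (simp add: mod_eq_dvd_iff)
    then have "b - (a + 1) = 0" using dvd_imp_le_int[of "b - (a+1)" M] d M3 by (cases "b - (a+1) = 0") auto
    then show ?thesis by simp
  qed
qed

lemma ivt_int:
  fixes f :: "nat \<Rightarrow> int"
  assumes "\<forall>t. f (Suc t) \<le> f t + 1" "f 0 \<le> k" "k \<le> f T"
  shows "\<exists>t. f t = k"
  using assms(3)
proof (induction T)
  case 0 then show ?case using assms(2) by auto
next
  case (Suc T)
  show ?case
  proof (cases "k \<le> f T")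
    case True then show ?thesis using Suc.IH by blast
  next
    case False then show ?thesis using Suc.prems assms(1)[rule_format, of T]
      by (intro exI[of _ "Suc T"]) simp
  qed
qed

lemma const_int:
  fixes f :: "nat \<Rightarrow> int"
  assumes "\<forall>s. a \<le> s \<and> s < b \<longrightarrow> f (Suc s) = f s" "a \<le> b"
  shows "f b = f a"
  using assms
proof (induction b)
  case 0 then show ?case by simp
next
  case (Suc b)
  then show ?case by (cases "a = Suc b") (auto simp: le_Suc_eq)
qed



theorem lemma2:
  fixes V :: "'a set" and E :: "'a \<Rightarrow> 'a \<Rightarrow> bool" and M :: int
    and \<gamma> :: "nat \<Rightarrow> 'a \<Rightarrow> int" and p0 :: 'a and k :: int
  assumes graph: "ugraph V E" and conn: "connected_graph V E" and two: "card V \<ge> 2"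
    and M3: "M \<ge> 3"
    and exec: "execution M V E \<gamma>"
    and wu0: "WU0 M V E (\<gamma> 0)"
    and live: "\<forall>p\<in>V. \<forall>t. \<exists>t'\<ge>t. incr \<gamma> t' p"
    and p0V: "p0 \<in> V"
    and p0min: "\<forall>q\<in>V. idelay M V E (\<gamma> 0) p0 q \<ge> 0"
    and k: "k \<ge> \<gamma> 0 p0 + int (diameter V E)"
  shows "(\<forall>p\<in>V. \<exists>t. lift M V E \<gamma> p0 p t = k) \<and> coherent V E \<gamma> (tpk M V E \<gamma> p0 k)"
proof -
  define L where "L = lift M V E \<gamma> p0"
  have M0: "M > 0" using M3 by simp
  have finV: "finite V" and symE: "\<And>p q. E p q \<Longrightarrow> E q p" and EV: "\<And>p q. E p q \<Longrightarrow> p \<in> V \<and> q \<in> V"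
    using graph by (auto simp: ugraph_def)
  have LSuc: "\<And>p t. L p (Suc t) = L p t + (if incr \<gamma> t p then 1 else 0)"
    by (simp add: L_def)
  have L0: "\<And>p. L p 0 = \<gamma> 0 p0 + idelay M V E (\<gamma> 0) p0 p"
    by (simp add: L_def)
  have Lmono: "\<And>p t t'. t \<le> t' \<Longrightarrow> L p t \<le> L p t'"
    by (rule lift_Suc_mono_le) (simp_all add: LSuc)
  have stepf: "incr \<gamma> t p \<Longrightarrow> p \<in> V \<and> enabled M V E (\<gamma> t) p \<and> \<gamma> (Suc t) p = res M (\<gamma> t p + 1)" for t p
  proof -
    assume inc: "incr \<gamma> t p"
    from exec have "step M V E (\<gamma> t) (\<gamma> (Suc t))" by (simp add: execution_def)
    then obtain S where S: "S \<subseteq> V" "\<forall>p\<in>S. enabled M V E (\<gamma> t) p"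
      "\<gamma> (Suc t) = (\<lambda>p. if p \<in> S then res M (\<gamma> t p + 1) else \<gamma> t p)"
      unfolding step_def by blast
    have "p \<in> S" using inc S(3) by (auto simp: incr_def split: if_splits)
    then show ?thesis using S by auto
  qed
  have range0: "\<And>p. p \<in> V \<Longrightarrow> 0 \<le> \<gamma> 0 p \<and> \<gamma> 0 p < M" using exec by (simp add: execution_def)
  define P where "P = (\<lambda>x. SOME xs. is_path V E p0 xs x)"
  have Ppath: "is_path V E p0 (P x) x" if xV: "x \<in> V" for x
  proof -
    have "\<exists>xs. is_path V E p0 xs x" using conn p0V xV by (simp add: connected_graph_def)
    then show ?thesis unfolding P_def by (rule someI_ex)
  qed
  have idP: "\<And>x. idelay M V E (\<gamma> 0) p0 x = delay M (\<gamma> 0) (P x)"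
    by (simp add: idelay_def P_def)
  have samedel: "\<And>x xs. is_path V E p0 xs x \<Longrightarrow> delay M (\<gamma> 0) xs = idelay M V E (\<gamma> 0) p0 x"
  proof -
    fix x xs assume h: "is_path V E p0 xs x"
    then have "x \<in> V" by (auto simp: is_path_def)
    then show "delay M (\<gamma> 0) xs = idelay M V E (\<gamma> 0) p0 x"
    proof -
      have "delay M (\<gamma> 0) xs = delay M (\<gamma> 0) (P x)"
        using wu0 h Ppath[OF \<open>x \<in> V\<close>] unfolding WU0_def by blast
      then show ?thesis by (simp add: idP)
    qed
  qed
  have base_mod: "\<And>p. p \<in> V \<Longrightarrow> \<gamma> 0 p = L p 0 mod M"
  proof -
    fix p assume pV: "p \<in> V"
    have pp: "is_path V E p0 (P p) p" using Ppath pV .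
    have "delay M (\<gamma> 0) (P p) mod M = (\<gamma> 0 p - \<gamma> 0 p0) mod M"
      using delay_mod[OF M0, of "P p" "\<gamma> 0"] pp by (simp add: is_path_def)
    moreover have "L p 0 mod M = (\<gamma> 0 p0 + delay M (\<gamma> 0) (P p) mod M) mod M"
      by (simp add: L0 idP mod_add_right_eq)
    ultimately have "L p 0 mod M = (\<gamma> 0 p0 + (\<gamma> 0 p - \<gamma> 0 p0)) mod M"
      by (simp add: mod_add_right_eq)
    also have "... = \<gamma> 0 p" using range0[OF pV] by simp
    finally show "\<gamma> 0 p = L p 0 mod M" by simp
  qed
  have base_nb: "\<And>p q. E p q \<Longrightarrow> \<bar>L q 0 - L p 0\<bar> \<le> 1"
  proof -
    fix p q assume e: "E p q"
    then have pV: "p \<in> V" and qV: "q \<in> V" using EV by auto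
    have pp: "is_path V E p0 (P p) p" using Ppath pV .
    have pq: "is_path V E p0 (P p @ [q]) q" using pp e qV
      by (auto simp: is_path_def adj_list_snoc)
    have "idelay M V E (\<gamma> 0) p0 q = delay M (\<gamma> 0) (P p @ [q])" using samedel[OF pq] by simp
    also have "... = delay M (\<gamma> 0) (P p) + ominus M (\<gamma> 0 q) (\<gamma> 0 p)"
      using pp by (simp add: delay_snoc is_path_def)
    finally have "L q 0 - L p 0 = ominus M (\<gamma> 0 q) (\<gamma> 0 p)" by (simp add: L0 idP)
    moreover have "loc_comp M (\<gamma> 0 p) (\<gamma> 0 q)" using wu0 e by (simp add: WU0_def WU_def)
    ultimately show "\<bar>L q 0 - L p 0\<bar> \<le> 1"
      using ominus_le1[OF M0, of "\<gamma> 0 q" "\<gamma> 0 p"] ominus_ge[OF M0, of "\<gamma> 0 p" "\<gamma> 0 q"] by linarith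
  qed
  have INV: "(\<forall>p\<in>V. \<gamma> t p = L p t mod M) \<and> (\<forall>p q. E p q \<longrightarrow> \<bar>L q t - L p t\<bar> \<le> 1)" for t
  proof (induction t)
    case 0 then show ?case using base_mod base_nb by auto
  next
    case (Suc t)
    have A: "\<forall>p\<in>V. \<gamma> (Suc t) p = L p (Suc t) mod M"
    proof
      fix p assume pV: "p \<in> V"
      show "\<gamma> (Suc t) p = L p (Suc t) mod M"
      proof (cases "incr \<gamma> t p")
        case True
        then have "\<gamma> (Suc t) p = (L p t mod M + 1) mod M" using stepf Suc pV by (simp add: res_def)
        then show ?thesis using True by (simp add: LSuc mod_add_left_eq)
      next
        case False then show ?thesis using Suc pV by (simp add: LSuc incr_def)
      qed
    qed
    have B: "\<bar>L q (Suc t) - L p (Suc t)\<bar> \<le> 1" if e: "E p q" for p q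
    proof -
      have pV: "p \<in> V" and qV: "q \<in> V" using EV e by auto
      have hp: "incr \<gamma> t p \<longrightarrow> 0 \<le> L q t - L p t \<and> L q t - L p t \<le> 1"
        using en_diff[OF M3, of V E "\<gamma> t" p q "L p t" "L q t"] stepf Suc pV qV e
        by (auto simp: nbrs_def)
      have hq: "incr \<gamma> t q \<longrightarrow> 0 \<le> L p t - L q t \<and> L p t - L q t \<le> 1"
      proof
        assume iq: "incr \<gamma> t q"
        have pn: "p \<in> nbrs V E q" using symE[OF e] pV by (simp add: nbrs_def)
        have ab: "\<bar>L p t - L q t\<bar> \<le> 1" using Suc e by (simp add: abs_minus_commute)
        show "0 \<le> L p t - L q t \<and> L p t - L q t \<le> 1"
        proof -
          have enq: "enabled M V E (\<gamma> t) q" using stepf[OF iq] by blast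
          have cq: "\<gamma> t q = L q t mod M" "\<gamma> t p = L p t mod M" using Suc pV qV by auto
          show ?thesis by (rule en_diff[OF M3 enq pn cq ab])
        qed
      qed
      show ?thesis using hp hq Suc e by (auto simp: LSuc)
    qed
    show ?case using A B by blast
  qed
  have endiff: "\<And>p q t. incr \<gamma> t p \<Longrightarrow> q \<in> nbrs V E p \<Longrightarrow> L q t - L p t \<le> 1"
  proof -
    fix p q t assume i: "incr \<gamma> t p" and qn: "q \<in> nbrs V E p"
    have e: "E p q" and qV: "q \<in> V" using qn by (auto simp: nbrs_def)
    show "L q t - L p t \<le> 1"
      using en_diff[OF M3, of V E "\<gamma> t" p q "L p t" "L q t"] stepf[OF i] INV[of t] e qV qn by auto
  qed
  have reach: "\<exists>t. L p t = k" if pV: "p \<in> V" for p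
  proof -
    obtain xs where xs: "is_path V E p0 xs p" using conn p0V pV by (auto simp: connected_graph_def)
    let ?h = "hop_dist V E p0 p"
    have "\<exists>ys. is_path V E p0 ys p \<and> length ys = Suc ?h"
      unfolding hop_dist_def
      by (rule LeastI[of _ "length xs - 1"]) (use xs in \<open>auto simp: is_path_def\<close>)
    then obtain ys where ys: "is_path V E p0 ys p" "length ys = Suc ?h" by blast
    have "idelay M V E (\<gamma> 0) p0 p = delay M (\<gamma> 0) ys" using samedel[OF ys(1)] by simp
    also have "... \<le> int ?h" using delay_le[OF M0, of ys "\<gamma> 0"] ys by (auto simp: is_path_def)
    also have "... \<le> int (diameter V E)"
    proof -
      have "finite {hop_dist V E p q | p q. p \<in> V \<and> q \<in> V}"
      proof -
        have "{hop_dist V E p q | p q. p \<in> V \<and> q \<in> V} = (\<lambda>(p,q). hop_dist V E p q) ` (V \<times> V)" by auto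
        then show ?thesis using finV by simp
      qed
      then have "?h \<le> diameter V E" unfolding diameter_def
        by (rule Max_ge) (use p0V pV in blast)
      then show ?thesis by simp
    qed
    finally have l0: "L p 0 \<le> k" using k by (simp add: L0)
    have unb: "\<exists>t. L p t \<ge> L p 0 + int n" for n
    proof (induction n)
      case 0 then show ?case by auto
    next
      case (Suc n)
      then obtain t where t: "L p t \<ge> L p 0 + int n" by blast
      obtain t' where t': "t' \<ge> t" "incr \<gamma> t' p" using live pV by blast
      have "L p (Suc t') = L p t' + 1" using t' by (simp add: LSuc)
      moreover have "L p t \<le> L p t'" using Lmono t' by blast
      ultimately show ?case using t by (intro exI[of _ "Suc t'"]) simp
    qed
    obtain T where "L p T \<ge> L p 0 + int (nat (k - L p 0))" using unb by blast
    then have "k \<le> L p T" using l0 by (simp split: if_splits)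
    then show ?thesis using ivt_int[of "L p" k T] l0 by (simp add: LSuc)
  qed
  define C where "C = tpk M V E \<gamma> p0 k"
  have Ck: "\<And>q. q \<in> V \<Longrightarrow> L q (C q) = k"
    unfolding C_def tpk_def L_def[symmetric] using reach by (rule LeastI_ex)
  have Cless: "\<And>q t. q \<in> V \<Longrightarrow> t < C q \<Longrightarrow> L q t < k"
  proof -
    fix q t assume qV: "q \<in> V" and tl: "t < C q"
    have "L q t \<noteq> k" using tl unfolding C_def tpk_def L_def[symmetric] by (rule not_less_Least)
    moreover have "L q t \<le> L q (C q)" using Lmono tl by simp
    ultimately show "L q t < k" using Ck[OF qV] by simp
  qed
  have evfirst: "\<And>q t s. event V \<gamma> q t \<Longrightarrow> s < t \<Longrightarrow> L q s < L q t"
  proof -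
    fix q t s assume ev: "event V \<gamma> q t" and st: "s < t"
    then obtain s0 where s0: "t = Suc s0" "incr \<gamma> s0 q" by (auto simp: event_def)
    then have "L q t = L q s0 + 1" by (simp add: LSuc)
    moreover have "L q s \<le> L q s0" using Lmono st s0 by simp
    ultimately show "L q s < L q t" by simp
  qed
  have cut: "is_cut V \<gamma> C"
    unfolding is_cut_def
  proof
    fix q assume qV: "q \<in> V"
    show "event V \<gamma> q (C q)"
    proof (cases "C q")
      case 0 then show ?thesis using qV by (simp add: event_def)
    next
      case (Suc s)
      have "L q s < k" using Cless[OF qV] Suc by simp
      then have "incr \<gamma> s q" using Ck[OF qV] Suc by (auto simp: LSuc split: if_splits)
      then show ?thesis using qV Suc by (simp add: event_def)
    qed
  qed
  have causal1: "L (fst a) (snd a) \<le> L (fst b) (snd b)" if "leadsto V E \<gamma> a b" for a b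
  proof -
    obtain q t' p t where ab: "a = (q, t')" "b = (p, t)" by (cases a, cases b) auto
    from that ab have ev: "event V \<gamma> p t" "0 < t" "q = p \<or> q \<in> nbrs V E p" "event V \<gamma> q t'" "t' < t"
      and noev: "\<forall>s. t' < s \<and> s < t \<longrightarrow> \<not> event V \<gamma> q s"
      by (auto simp: leadsto_def)
    show ?thesis
    proof (cases "q = p")
      case True then show ?thesis using ab ev Lmono by simp
    next
      case False
      then have qn: "q \<in> nbrs V E p" using ev by blast
      obtain s where s: "t = Suc s" "incr \<gamma> s p" using ev(1,2) by (auto simp: event_def)
      have qV: "q \<in> V" using qn by (simp add: nbrs_def)
      have "L q s = L q t'"
      proof (rule const_int)
        show "\<forall>s'. t' \<le> s' \<and> s' < s \<longrightarrow> L q (Suc s') = L q s'"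
        proof (intro allI impI)
          fix s' assume "t' \<le> s' \<and> s' < s"
          then have "\<not> event V \<gamma> q (Suc s')" using noev s by auto
          then have "\<not> incr \<gamma> s' q" using qV by (auto simp: event_def)
          then show "L q (Suc s') = L q s'" by (simp add: LSuc)
        qed
        show "t' \<le> s" using ev s by simp
      qed
      moreover have "L q s - L p s \<le> 1" using endiff[OF s(2) qn] .
      moreover have "L p t = L p s + 1" using s by (simp add: LSuc)
      ultimately show ?thesis using ab by simp
    qed
  qed
  have causal: "precedes V E \<gamma> a b \<Longrightarrow> L (fst a) (snd a) \<le> L (fst b) (snd b)" for a b
    unfolding precedes_def
  proof (induction rule: rtranclp_induct)
    case (step y z) then show ?case using causal1[of y z] by linarith
  qed simp
  have chain: "\<forall>b. event V \<gamma> q b \<longrightarrow> a \<le> b \<longrightarrow> precedes V E \<gamma> (q, a) (q, b)"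
    if qa: "event V \<gamma> q a" for q a
  proof
    fix b
    show "event V \<gamma> q b \<longrightarrow> a \<le> b \<longrightarrow> precedes V E \<gamma> (q, a) (q, b)"
    proof (induction b rule: less_induct)
      case (less b)
      show ?case
      proof (intro impI)
        assume eb: "event V \<gamma> q b" and ab: "a \<le> b"
        show "precedes V E \<gamma> (q, a) (q, b)"
        proof (cases "a = b")
          case True then show ?thesis by (simp add: precedes_def)
        next
          case False
          let ?Q = "\<lambda>s. s < b \<and> event V \<gamma> q s"
          define g where "g = (GREATEST s. ?Q s)"
          have Qa: "?Q a" using False ab qa by simp
          have bnd: "\<forall>y. ?Q y \<longrightarrow> y \<le> b" by auto
          have Qg: "?Q g" unfolding g_def by (rule GreatestI_nat[where P="?Q" and b=b, OF Qa]) (use bnd in auto)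
          have ag: "a \<le> g" unfolding g_def by (rule Greatest_le_nat[where P="?Q" and b=b, OF Qa]) (use bnd in auto)
          have mx: "\<forall>s. g < s \<and> s < b \<longrightarrow> \<not> event V \<gamma> q s"
          proof (intro allI impI)
            fix s assume h: "g < s \<and> s < b"
            show "\<not> event V \<gamma> q s"
            proof
              assume "event V \<gamma> q s"
              then have "s \<le> g" unfolding g_def using h by (intro Greatest_le_nat[where P="?Q" and b=b]) (use bnd in auto)
              then show False using h by simp
            qed
          qed
          have "precedes V E \<gamma> (q, a) (q, g)" using less.IH[of g] Qg ag by auto
          moreover have "leadsto V E \<gamma> (q, g) (q, b)"
            using eb Qg mx by (auto simp: leadsto_def)
          ultimately show ?thesis unfolding precedes_def by (rule rtranclp.rtrancl_into_rtrancl)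
        qed
      qed
    qed
  qed
  have coh: "coherent V E \<gamma> C"
    unfolding coherent_def
  proof (intro conjI cut ballI allI impI)
    fix p q t t'
    assume pV: "p \<in> V" and qV: "q \<in> V" and h1: "precedes V E \<gamma> (q, t') (p, t)"
      and h2: "precedes V E \<gamma> (p, t) (p, C p)"
    have h: "precedes V E \<gamma> (q, t') (p, C p)" using h1 h2 unfolding precedes_def by simp
    show "precedes V E \<gamma> (q, t') (q, C q)"
    proof (cases "(q, t') = (p, C p)")
      case True then show ?thesis by (simp add: precedes_def)
    next
      case False
      have "(q, t') = (p, C p) \<or> (\<exists>y. leadsto V E \<gamma> (q, t') y)"
        using h unfolding precedes_def by (induction rule: converse_rtranclp_induct) auto
      then obtain y where "leadsto V E \<gamma> (q, t') y" using False by blast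
      then have evq: "event V \<gamma> q t'" by (cases y) (auto simp: leadsto_def)
      have "L q t' \<le> k" using causal[OF h] Ck[OF pV] by simp
      then have "t' \<le> C q" using evfirst[OF evq, of "C q"] Ck[OF qV] by (cases "C q < t'") auto
      then show ?thesis using chain[OF evq] cut qV by (auto simp: is_cut_def)
    qed
  qed
  show ?thesis using reach coh by (simp add: L_def C_def)
qed

end
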